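(* Let $U_1,U_2,\dots$ be i.i.d. almost surely positive random variables distributed as $U$ with tail function $Q(x)=\mathbb{P}(U>x)$, and assume $\mathbb{E}[U^2]<\infty$ and that there exist $\beta\in(0,1/2)$ and $x_0>0$ in the interior of the support of $U$ such that $Q^{1/2-\beta}$ is convex on $[x_0,\infty)$. Let $V_N=\max(U_1,\dots,U_N)$. Then there exists a non-increasing deterministic function $\eta$ on $\mathbb{R}_+$ with $\lim_{y\to+\infty}\eta(y)=0$ such that $\lim_{N\to\infty}\mathbb{P}(B_N)=1$, where $B_N=\{V_N/\sqrt N\le \eta(N)\}$. *)

theory Defs
  imports "HOL-Probability.Probability"
begin

definition rv_support :: "'a measure \<Rightarrow> ('a \<Rightarrow> real) \<Rightarrow> real set" where
  "rv_support M X = {x. \<forall>e>0. measure M {\<omega> \<in> space M. X \<omega> \<in> ball x e} > 0}"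

end

theory Submission
  imports Defs
begin

theorem lemma3:
  fixes M :: "'a measure" and U :: "nat \<Rightarrow> 'a \<Rightarrow> real"
    and \<beta> x0 :: real
  assumes "prob_space M"
    and rv: "\<And>i. U i \<in> borel_measurable M"
    and indep: "prob_space.indep_vars M (\<lambda>_. borel) U UNIV"
    and ident: "\<And>i. distr M borel (U i) = distr M borel (U 0)"
    and pos: "\<And>i. AE \<omega> in M. U i \<omega> > 0"
    and L2: "integrable M (\<lambda>\<omega>. (U 0 \<omega>)\<^sup>2)"
    and beta: "0 < \<beta>" "\<beta> < 1/2"
    and x0: "x0 > 0" "x0 \<in> interior (rv_support M (U 0))"
    and cvx: "convex_on {x0..} (\<lambda>x. (measure M {\<omega> \<in> space M. U 0 \<omega> > x}) powr (1/2 - \<beta>))"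
  shows "\<exists>\<eta> :: real \<Rightarrow> real. antimono_on {0..} \<eta> \<and> (\<eta> \<longlongrightarrow> 0) at_top \<and>
    (\<lambda>N. measure M {\<omega> \<in> space M.
        Max ((\<lambda>i. U i \<omega>) ` {1..N}) / sqrt (real N) \<le> \<eta> (real N)}) \<longlonglongrightarrow> 1"
proof -
  interpret prob_space M by fact
  define Q where "Q s = measure M {\<omega>\<in>space M. U 0 \<omega> > s}" for s
  define g where "g s = integral\<^sup>L M (\<lambda>\<omega>. (U 0 \<omega>)\<^sup>2 * indicator {\<omega>\<in>space M. U 0 \<omega> > s} \<omega>)" for s
  have meas: "{\<omega>\<in>space M. U i \<omega> > s} \<in> sets M" for i s
    using rv[of i] by measurable
  have Qi: "measure M {\<omega>\<in>space M. U i \<omega> > s} = Q s" for i s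
  proof -
    have "measure (distr M borel (U i)) {s<..} = measure (distr M borel (U 0)) {s<..}"
      using ident[of i] by simp
    moreover have "measure (distr M borel (U i)) {s<..} = measure M {\<omega>\<in>space M. U i \<omega> > s}" for i
      using rv[of i] by (subst measure_distr) (auto intro!: arg_cong[where f="measure M"])
    ultimately show ?thesis unfolding Q_def by metis
  qed
  have ind_int: "integrable M (indicator {\<omega>\<in>space M. U 0 \<omega> > s} :: 'a \<Rightarrow> real)" for s
    by (intro integrable_real_indicator meas) (simp add: less_top[symmetric])
  have intg: "integrable M (\<lambda>\<omega>. (U 0 \<omega>)\<^sup>2 * indicator {\<omega>\<in>space M. U 0 \<omega> > s} \<omega>)" for s
    by (rule integrable_real_mult_indicator[OF meas L2])
  have cheb: "s\<^sup>2 * Q s \<le> g s" if "0 \<le> s" for s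
  proof -
    have "s\<^sup>2 * Q s = integral\<^sup>L M (\<lambda>\<omega>. s\<^sup>2 * indicator {\<omega>\<in>space M. U 0 \<omega> > s} \<omega>)"
      unfolding Q_def using meas ind_int by simp
    also have "\<dots> \<le> g s" unfolding g_def
    proof (rule integral_mono)
      show "integrable M (\<lambda>\<omega>. s\<^sup>2 * indicator {\<omega>\<in>space M. U 0 \<omega> > s} \<omega>)"
        using ind_int by simp
      show "integrable M (\<lambda>\<omega>. (U 0 \<omega>)\<^sup>2 * indicator {\<omega>\<in>space M. U 0 \<omega> > s} \<omega>)" by (rule intg)
      fix \<omega> show "s\<^sup>2 * indicator {\<omega>\<in>space M. U 0 \<omega> > s} \<omega> \<le> (U 0 \<omega>)\<^sup>2 * indicator {\<omega>\<in>space M. U 0 \<omega> > s} \<omega>"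
        using that by (auto split: split_indicator intro!: power_mono)
    qed
    finally show ?thesis .
  qed
  have g_anti: "g t \<le> g s" if "s \<le> t" for s t
    unfolding g_def
    by (rule integral_mono[OF intg intg]) (use that in \<open>auto split: split_indicator\<close>)
  have g_nonneg: "0 \<le> g s" for s
    unfolding g_def by (rule integral_nonneg_AE) auto
  have g_lim: "(g \<longlongrightarrow> 0) at_top"
  proof -
    have "((\<lambda>s. integral\<^sup>L M (\<lambda>\<omega>. (U 0 \<omega>)\<^sup>2 * indicator {\<omega>\<in>space M. U 0 \<omega> > s} \<omega>))
          \<longlongrightarrow> integral\<^sup>L M (\<lambda>\<omega>. 0::real)) at_top"
    proof (rule integral_dominated_convergence_at_top[where w="\<lambda>\<omega>. (U 0 \<omega>)\<^sup>2"])
      show "(\<lambda>\<omega>. 0::real) \<in> borel_measurable M" by simp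
      show "(\<lambda>\<omega>. (U 0 \<omega>)\<^sup>2 * indicator {\<omega>\<in>space M. U 0 \<omega> > s} \<omega>) \<in> borel_measurable M" for s
        using intg[of s] by auto
      show "integrable M (\<lambda>\<omega>. (U 0 \<omega>)\<^sup>2)" by (rule L2)
      show "AE \<omega> in M. ((\<lambda>s. (U 0 \<omega>)\<^sup>2 * indicator {\<omega>\<in>space M. U 0 \<omega> > s} \<omega>) \<longlongrightarrow> 0) at_top"
      proof (rule AE_I2)
        fix \<omega> assume "\<omega> \<in> space M"
        have "eventually (\<lambda>s. (U 0 \<omega>)\<^sup>2 * indicator {\<omega>\<in>space M. U 0 \<omega> > s} \<omega> = (0::real)) at_top"
          unfolding eventually_at_top_linorder
          by (rule exI[of _ "U 0 \<omega>"]) (auto split: split_indicator)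
        then show "((\<lambda>s. (U 0 \<omega>)\<^sup>2 * indicator {\<omega>\<in>space M. U 0 \<omega> > s} \<omega>) \<longlongrightarrow> 0) at_top"
          by (rule tendsto_eventually)
      qed
      show "\<forall>\<^sub>F s in at_top. AE \<omega> in M. norm ((U 0 \<omega>)\<^sup>2 * indicator {\<omega>\<in>space M. U 0 \<omega> > s} \<omega>) \<le> (U 0 \<omega>)\<^sup>2"
        by (auto split: split_indicator)
    qed
    then show ?thesis unfolding g_def by simp
  qed
  define r where "r y = root 4 (max 1 y)" for y
  have r_ge1: "1 \<le> r y" for y unfolding r_def by simp
  have r_mono: "r x \<le> r y" if "x \<le> y" for x y
    unfolding r_def using that by simp
  have r_eq: "r y = root 4 y" if "1 \<le> y" for y unfolding r_def using that by simp
  have r_lim: "filterlim r at_top at_top"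
    unfolding filterlim_at_top eventually_at_top_linorder
  proof (intro allI exI[of _ "\<bar>_\<bar> ^ 4 + 1"] allI impI)
    fix Z y :: real assume y: "\<bar>Z\<bar> ^ 4 + 1 \<le> y"
    moreover have "0 \<le> \<bar>Z\<bar> ^ 4" by simp
    ultimately have "1 \<le> y" by linarith
    have "Z \<le> \<bar>Z\<bar>" by simp
    also have "\<bar>Z\<bar> = root 4 (\<bar>Z\<bar> ^ 4)" by (rule real_root_power_cancel[symmetric]) auto
    also have "\<dots> \<le> root 4 y" using y by simp
    also have "\<dots> = r y" using r_eq[OF \<open>1 \<le> y\<close>] by simp
    finally show "Z \<le> r y" .
  qed
  define \<eta> where "\<eta> y = max (root 4 (g (r y))) (1 / r y)" for y
  have "antimono_on {0..} \<eta>"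
  proof (rule monotone_onI)
    fix x y :: real assume "x \<le> y"
    then have "r x \<le> r y" by (rule r_mono)
    then have "g (r y) \<le> g (r x)" by (rule g_anti)
    moreover have "1 / r y \<le> 1 / r x"
      using \<open>r x \<le> r y\<close> r_ge1[of x] by (intro divide_left_mono) auto
    ultimately show "\<eta> y \<le> \<eta> x" unfolding \<eta>_def
      by (intro max.mono) auto
  qed
  moreover have "(\<eta> \<longlongrightarrow> 0) at_top"
  proof -
    have "((\<lambda>y. g (r y)) \<longlongrightarrow> 0) at_top"
      by (rule filterlim_compose[OF g_lim r_lim])
    then have "((\<lambda>y. root 4 (g (r y))) \<longlongrightarrow> root 4 0) at_top"
      by (rule tendsto_real_root)
    moreover have "((\<lambda>y. 1 / r y) \<longlongrightarrow> 0) at_top"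
      using tendsto_inverse_0_at_top[OF r_lim] by (simp add: divide_inverse)
    ultimately have "(\<eta> \<longlongrightarrow> max (root 4 0) 0) at_top"
      unfolding \<eta>_def by (rule tendsto_max)
    then show ?thesis by simp
  qed
  moreover have "(\<lambda>N. measure M {\<omega> \<in> space M.
        Max ((\<lambda>i. U i \<omega>) ` {1..N}) / sqrt (real N) \<le> \<eta> (real N)}) \<longlonglongrightarrow> 1"
    (is "?P \<longlonglongrightarrow> 1")
  proof (rule tendsto_sandwich[where f="\<lambda>N. 1 - sqrt (g (r (real N)))" and h="\<lambda>N. 1"])
    show "(\<lambda>N. 1::real) \<longlonglongrightarrow> 1" by simp
    have "((\<lambda>N. g (r (real N))) \<longlongrightarrow> 0) sequentially"
      by (rule filterlim_compose[OF g_lim filterlim_compose[OF r_lim filterlim_real_sequentially]])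
    then have "((\<lambda>N. sqrt (g (r (real N)))) \<longlongrightarrow> sqrt 0) sequentially"
      by (rule tendsto_real_sqrt)
    then have "((\<lambda>N. 1 - sqrt (g (r (real N)))) \<longlongrightarrow> 1 - 0) sequentially"
      by (intro tendsto_diff tendsto_const) simp
    then show "(\<lambda>N. 1 - sqrt (g (r (real N)))) \<longlonglongrightarrow> 1" by simp
    show "\<forall>\<^sub>F N in sequentially. ?P N \<le> 1"
      by (simp add: measure_le_1)
    show "\<forall>\<^sub>F N in sequentially. 1 - sqrt (g (r (real N))) \<le> ?P N"
      unfolding eventually_sequentially
    proof (intro exI allI impI)
      fix N :: nat assume N1: "1 \<le> N"
      define rN where "rN = r (real N)"
      define a where "a = g rN"
      define e where "e = \<eta> (real N)"
      define c where "c = e * sqrt (real N)"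
      have rN: "rN = root 4 (real N)" unfolding rN_def using N1 by (simp add: r_eq)
      have rN1: "1 \<le> rN" unfolding rN_def by (rule r_ge1)
      have sq: "sqrt (real N) = rN ^ 2"
        unfolding sqrt_def rN
        by (rule real_root_pos_unique) (auto simp flip: power_mult)
      have e1: "1 / rN \<le> e" "root 4 a \<le> e" unfolding e_def \<eta>_def a_def rN_def by auto
      have epos: "0 < e" using e1(1) rN1 by (smt (verit) divide_pos_pos)
      have a0: "0 \<le> a" unfolding a_def by (rule g_nonneg)
      have "rN \<le> c"
      proof -
        have "rN = (1 / rN) * rN ^ 2" using rN1 by (simp add: power2_eq_square)
        also have "\<dots> \<le> e * rN ^ 2" using e1(1) by (intro mult_right_mono) auto
        finally show ?thesis unfolding c_def sq .
      qed
      then have c0: "0 \<le> c" using rN1 by linarith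
      have "c\<^sup>2 * Q c \<le> a"
        using cheb[OF c0] g_anti[OF \<open>rN \<le> c\<close>] unfolding a_def by linarith
      moreover have "c\<^sup>2 = e\<^sup>2 * real N" unfolding c_def by (simp add: power_mult_distrib)
      moreover have "a \<le> sqrt a * e\<^sup>2"
      proof -
        have "sqrt a = (root 4 a)\<^sup>2"
          unfolding sqrt_def
          by (rule real_root_pos_unique) (use a0 in \<open>auto simp flip: power_mult\<close>)
        also have "\<dots> \<le> e\<^sup>2" using e1(2) a0 by (intro power_mono) auto
        finally have "sqrt a \<le> e\<^sup>2" .
        then have "sqrt a * sqrt a \<le> sqrt a * e\<^sup>2" using a0 by (intro mult_left_mono) auto
        then show ?thesis using a0 by simp
      qed
      ultimately have "e\<^sup>2 * (real N * Q c) \<le> e\<^sup>2 * sqrt a" by (simp add: algebra_simps)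
      then have NQ: "real N * Q c \<le> sqrt a" using epos by simp
      define A where "A i = {\<omega>\<in>space M. U i \<omega> > c}" for i
      have Asets: "A i \<in> sets M" for i unfolding A_def by (rule meas)
      have ev: "{\<omega> \<in> space M. Max ((\<lambda>i. U i \<omega>) ` {1..N}) / sqrt (real N) \<le> e}
          = space M - (\<Union>i\<in>{1..N}. A i)"
      proof -
        have sN: "0 < sqrt (real N)" using N1 by simp
        have "Max ((\<lambda>i. U i \<omega>) ` {1..N}) / sqrt (real N) \<le> e \<longleftrightarrow> (\<forall>i\<in>{1..N}. U i \<omega> \<le> c)" for \<omega>
          unfolding c_def using N1 sN by (subst pos_divide_le_eq[OF sN]) (auto simp: Max_le_iff)
        then show ?thesis unfolding A_def by auto
      qed
      have "measure M (\<Union>i\<in>{1..N}. A i) \<le> (\<Sum>i\<in>{1..N}. measure M (A i))"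
        by (rule measure_UNION_le) (auto intro: Asets)
      also have "\<dots> = real N * Q c" unfolding A_def by (simp add: Qi)
      finally have "measure M (\<Union>i\<in>{1..N}. A i) \<le> sqrt a" using NQ by linarith
      moreover have "?P N = 1 - measure M (\<Union>i\<in>{1..N}. A i)"
        unfolding e_def[symmetric] ev by (rule prob_compl) (auto intro: Asets)
      ultimately show "1 - sqrt (g (r (real N))) \<le> ?P N" unfolding a_def rN_def by linarith
    qed
  qed
  ultimately show ?thesis by blast
qed

end
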